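(* Let $G=(V,E)$ be a hypergraph, $k\ge 2$ an integer, and $\emptyset\neq R\subsetneq U\subsetneq V$. Let $S=\{u_1,\dots,u_p\}\subseteq U\setminus R$ with $p\ge 2k-2$. For each $i\in[p]$ let $(\overline{A_i},A_i)$ be a minimum $((S\cup R)\setminus\{u_i\},\overline{U})$-terminal cut. Suppose that $u_i\in A_i\setminus\bigl(\bigcup_{j\in[p]\setminus\{i\}}A_j\bigr)$ for every $i\in[p]$. Then there exists a $k$-partition $(P_1,\dots,P_k)$ of $V$ with $\overline{U}\subsetneq P_k$ such that \[\mathrm{cost}(P_1,\dots,P_k)\le \tfrac12\min\{d(A_i)+d(A_j): i,j\in[p],\ i\neq j\}.\]
   Context: A hypergraph $G=(V,E)$ has finite vertex set $V$ and finite multiset $E$ of hyperedges (subsets of $V$). For $X\subseteq V$, $\overline X=V\setminus X$ and $d(X)$ is the number of hyperedges meeting both $X$ and $\overline X$. For a partition of $V$ into non-empty parts, $\mathrm{cost}$ is the number of hyperedges meeting at least two parts. For disjoint $S',T'\subseteq V$, a 2-partition $(X,\overline X)$ is an $(S',T')$-terminal cut if $S'\subseteq X\subseteq V\setminus T'$ (so here $(S\cup R)\setminus\{u_i\}\subseteq\overline{A_i}$ and $\overline U\subseteq A_i$); it is minimum if $d(X)$ is minimum among all $(S',T')$-terminal cuts. *)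

theory Defs
  imports Complex_Main "HOL-Library.Multiset"
begin

definition hypergraph :: "'a set \<Rightarrow> 'a set multiset \<Rightarrow> bool" where
  "hypergraph V E \<longleftrightarrow> finite V \<and> (\<forall>e \<in># E. e \<subseteq> V)"

definition dcut :: "'a set \<Rightarrow> 'a set multiset \<Rightarrow> 'a set \<Rightarrow> nat" where
  "dcut V E X = size (filter_mset (\<lambda>e. e \<inter> X \<noteq> {} \<and> e \<inter> (V - X) \<noteq> {}) E)"

definition is_k_partition :: "'a set \<Rightarrow> nat \<Rightarrow> (nat \<Rightarrow> 'a set) \<Rightarrow> bool" where
  "is_k_partition V k P \<longleftrightarrow>
     (\<forall>i\<in>{1..k}. P i \<noteq> {}) \<and>
     (\<forall>i\<in>{1..k}. \<forall>j\<in>{1..k}. i \<noteq> j \<longrightarrow> P i \<inter> P j = {}) \<and>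
     (\<Union>i\<in>{1..k}. P i) = V"

definition cost :: "'a set multiset \<Rightarrow> nat \<Rightarrow> (nat \<Rightarrow> 'a set) \<Rightarrow> nat" where
  "cost E k P = size (filter_mset
     (\<lambda>e. \<exists>i\<in>{1..k}. \<exists>j\<in>{1..k}. i \<noteq> j \<and> e \<inter> P i \<noteq> {} \<and> e \<inter> P j \<noteq> {}) E)"

text \<open>(X, V - X) is an (S',T')-terminal cut.\<close>
definition terminal_cut :: "'a set \<Rightarrow> 'a set \<Rightarrow> 'a set \<Rightarrow> 'a set \<Rightarrow> bool" where
  "terminal_cut V S' T' X \<longleftrightarrow> S' \<subseteq> X \<and> X \<subseteq> V - T'"

definition min_terminal_cut ::
  "'a set \<Rightarrow> 'a set multiset \<Rightarrow> 'a set \<Rightarrow> 'a set \<Rightarrow> 'a set \<Rightarrow> bool" where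
  "min_terminal_cut V E S' T' X \<longleftrightarrow> terminal_cut V S' T' X \<and>
     (\<forall>Y. terminal_cut V S' T' Y \<longrightarrow> dcut V E X \<le> dcut V E Y)"

end

theory Submission
  imports Defs
begin

definition sgl :: "(nat \<Rightarrow> 'a set) \<Rightarrow> nat set \<Rightarrow> nat \<Rightarrow> 'a \<Rightarrow> bool" where
  "sgl A I m x \<longleftrightarrow> m \<in> I \<and> x \<in> A m \<and> (\<forall>n\<in>I. n \<noteq> m \<longrightarrow> x \<notin> A n)"
definition outs :: "(nat \<Rightarrow> 'a set) \<Rightarrow> nat set \<Rightarrow> 'a \<Rightarrow> bool" where
  "outs A I x \<longleftrightarrow> (\<forall>m\<in>I. x \<notin> A m)"
definition dbl :: "(nat \<Rightarrow> 'a set) \<Rightarrow> nat set \<Rightarrow> 'a \<Rightarrow> bool" where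
  "dbl A I x \<longleftrightarrow> (\<exists>m\<in>I. \<exists>n\<in>I. m \<noteq> n \<and> x \<in> A m \<and> x \<in> A n)"
definition QQ :: "(nat \<Rightarrow> 'a set) \<Rightarrow> nat set \<Rightarrow> 'a set \<Rightarrow> bool" where
  "QQ A I e \<longleftrightarrow> (\<exists>x\<in>e. \<exists>y\<in>e. \<exists>m n. m \<noteq> n \<and> sgl A I m x \<and> sgl A I n y)"
definition Q1 :: "(nat \<Rightarrow> 'a set) \<Rightarrow> nat set \<Rightarrow> 'a set \<Rightarrow> bool" where
  "Q1 A I e \<longleftrightarrow> (\<exists>x\<in>e. \<exists>m. sgl A I m x)"
definition Ob :: "(nat \<Rightarrow> 'a set) \<Rightarrow> nat set \<Rightarrow> 'a set \<Rightarrow> bool" where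
  "Ob A I e \<longleftrightarrow> (\<exists>x\<in>e. outs A I x)"
definition Db :: "(nat \<Rightarrow> 'a set) \<Rightarrow> nat set \<Rightarrow> 'a set \<Rightarrow> bool" where
  "Db A I e \<longleftrightarrow> (\<exists>x\<in>e. dbl A I x)"
definition psi :: "(nat \<Rightarrow> 'a set) \<Rightarrow> nat set \<Rightarrow> 'a set \<Rightarrow> nat" where
  "psi A I e = (if QQ A I e \<or> (Ob A I e \<and> Db A I e) then 2
     else if Q1 A I e \<and> (Ob A I e \<or> Db A I e) then 1 else 0)"
definition crs :: "'a set \<Rightarrow> 'a set \<Rightarrow> nat" where
  "crs X e = (if (\<exists>x\<in>e. x \<in> X) \<and> (\<exists>x\<in>e. x \<notin> X) then 1 else 0)"

lemma crs_le1: "crs X e \<le> 1" unfolding crs_def by auto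

lemma kinds: "outs A I x \<or> dbl A I x \<or> (\<exists>m. sgl A I m x)"
  unfolding outs_def dbl_def sgl_def by blast

lemma outs_ins: "outs A (insert t I) x \<longleftrightarrow> outs A I x \<and> x \<notin> A t"
  unfolding outs_def by auto
lemma dbl_ins: "t \<notin> I \<Longrightarrow> dbl A (insert t I) x \<longleftrightarrow> dbl A I x \<or> (x \<in> A t \<and> (\<exists>m. sgl A I m x))"
  unfolding dbl_def sgl_def by (auto; metis)
lemma sgl_ins: "t \<notin> I \<Longrightarrow> sgl A (insert t I) m x \<longleftrightarrow> (m = t \<and> x \<in> A t \<and> outs A I x) \<or> (m \<noteq> t \<and> sgl A I m x \<and> x \<notin> A t)"
  unfolding sgl_def outs_def by auto

lemma excl: "outs A I x \<Longrightarrow> \<not> dbl A I x" "outs A I x \<Longrightarrow> \<not> sgl A I m x"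
  "dbl A I x \<Longrightarrow> \<not> sgl A I m x" "sgl A I m x \<Longrightarrow> sgl A I n x \<Longrightarrow> m = n"
  unfolding outs_def dbl_def sgl_def by auto metis

lemma sgl_mem: "sgl A I m x \<Longrightarrow> m \<in> I" unfolding sgl_def by auto

lemma QQ_Q1: "QQ A I e \<Longrightarrow> Q1 A I e" unfolding QQ_def Q1_def by blast

lemma psi_2: "QQ A I e \<or> (Ob A I e \<and> Db A I e) \<Longrightarrow> psi A I e = 2" unfolding psi_def by auto
lemma psi_ge1: "Q1 A I e \<Longrightarrow> Ob A I e \<or> Db A I e \<Longrightarrow> psi A I e \<ge> 1" unfolding psi_def by auto
lemma psi_le1: "\<not> QQ A I e \<Longrightarrow> \<not> Ob A I e \<Longrightarrow> psi A I e \<le> 1" unfolding psi_def by auto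
lemma psi_le2: "psi A I e \<le> 2" unfolding psi_def by auto
lemma psi_le1': "\<not> QQ A I e \<Longrightarrow> \<not> (Ob A I e \<and> Db A I e) \<Longrightarrow> psi A I e \<le> 1" unfolding psi_def by auto
lemma psi_0': "\<not> QQ A I e \<Longrightarrow> \<not> (Ob A I e \<and> Db A I e) \<Longrightarrow> \<not> (Q1 A I e \<and> (Ob A I e \<or> Db A I e)) \<Longrightarrow> psi A I e = 0"
  unfolding psi_def by auto
lemma psi_1D: "psi A I e = 1 \<Longrightarrow> Q1 A I e \<and> (Ob A I e \<or> Db A I e)" unfolding psi_def by (auto split: if_splits)

lemma step:
  assumes tI: "t \<notin> I"
  shows "psi A (insert t I) e + crs (A t \<inter> {x. dbl A I x}) e \<le> psi A I e + crs (A t) e"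
proof -
  let ?J = "insert t I"
  note oi = outs_ins[of A t I] and di = dbl_ins[OF tI, of A] and si = sgl_ins[OF tI, of A]
  show ?thesis
  proof (cases "\<forall>x\<in>e. x \<notin> A t")
    case True
    have "outs A ?J x = outs A I x" "dbl A ?J x = dbl A I x" "sgl A ?J m x = sgl A I m x" if "x \<in> e" for x m
      using True that oi di si sgl_mem[of A I m x] tI by auto
    then have "QQ A ?J e = QQ A I e" "Q1 A ?J e = Q1 A I e" "Ob A ?J e = Ob A I e" "Db A ?J e = Db A I e"
      unfolding QQ_def Q1_def Ob_def Db_def by metis+
    then have "psi A ?J e = psi A I e" unfolding psi_def by (simp only:)
    moreover have "crs (A t \<inter> {x. dbl A I x}) e = 0" using True unfolding crs_def by auto
    ultimately show ?thesis by simp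
  next
    case False
    then obtain x0 where x0: "x0 \<in> e" "x0 \<in> A t" by blast
    show ?thesis
    proof (cases "\<forall>x\<in>e. x \<in> A t")
      case True
      have nO: "\<not> Ob A ?J e" using True oi unfolding Ob_def by auto
      have nQ: "\<not> QQ A ?J e" using True si unfolding QQ_def by auto
      have le1: "psi A ?J e \<le> 1" using psi_le1[OF nQ nO] .
      have c0: "crs (A t) e = 0" using True unfolding crs_def by auto
      show ?thesis
      proof (cases "crs (A t \<inter> {x. dbl A I x}) e = 0")
        case c'0: True
        show ?thesis
        proof (cases "psi A ?J e = 0")
          case True then show ?thesis using c'0 by simp
        next
          case False
          then have p1: "psi A ?J e = 1" using le1 by simp
          from psi_1D[OF p1] nO have q1: "Q1 A ?J e" and dJ: "Db A ?J e" by auto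
          from q1 obtain x m where x: "x \<in> e" "sgl A ?J m x" unfolding Q1_def by blast
          with True si have ox: "outs A I x" by auto
          from dJ obtain y where y: "y \<in> e" "dbl A ?J y" unfolding Db_def by blast
          with di have "dbl A I y \<or> (\<exists>m. sgl A I m y)" by auto
          then have "psi A I e \<ge> 1"
          proof
            assume "dbl A I y"
            then have "Ob A I e \<and> Db A I e" using x ox y unfolding Ob_def Db_def by blast
            then show ?thesis using psi_2 by (metis one_le_numeral)
          next
            assume "\<exists>m. sgl A I m y"
            then have "Q1 A I e" "Ob A I e" using x ox y unfolding Ob_def Q1_def by blast+
            then show ?thesis using psi_ge1 by blast
          qed
          then show ?thesis using p1 c'0 c0 by simp
        qed
      next
        case c'1: False
        then obtain y where y: "y \<in> e" "\<not> dbl A I y" unfolding crs_def using True by (auto split: if_splits)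
        from c'1 obtain z where z: "z \<in> e" "dbl A I z" unfolding crs_def by (auto split: if_splits)
        have c'1': "crs (A t \<inter> {x. dbl A I x}) e = 1" using c'1 unfolding crs_def by (auto split: if_splits)
        from y kinds[of A I y] have "outs A I y \<or> (\<exists>m. sgl A I m y)" by blast
        then show ?thesis
        proof
          assume "outs A I y"
          then have "Ob A I e" "Db A I e" using y z unfolding Ob_def Db_def by blast+
          then have "psi A I e = 2" by (simp add: psi_2)
          then show ?thesis using le1 c'1' c0 by simp
        next
          assume sy: "\<exists>m. sgl A I m y"
          have "Q1 A I e" "Db A I e" using sy y z unfolding Q1_def Db_def by blast+
          then have "psi A I e \<ge> 1" using psi_ge1 by blast
          moreover have "psi A ?J e = 1 \<Longrightarrow> psi A I e = 2"
          proof -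
            assume "psi A ?J e = 1"
            from psi_1D[OF this] obtain x m where x: "x \<in> e" "sgl A ?J m x" unfolding Q1_def by blast
            with True si have ox: "outs A I x" by auto
            have "Ob A I e" "Db A I e" using x ox z unfolding Ob_def Db_def by blast+
            then show "psi A I e = 2" by (simp add: psi_2)
          qed
          ultimately show ?thesis using le1 c'1' c0 by (cases "psi A ?J e = 1") auto
        qed
      qed
    next
      case False
      then obtain x1 where x1: "x1 \<in> e" "x1 \<notin> A t" by blast
      have c1: "crs (A t) e = 1" using x0 x1 unfolding crs_def by auto
      show ?thesis
      proof (cases "crs (A t \<inter> {x. dbl A I x}) e = 0")
        case c'0: True
        show ?thesis
        proof (cases "psi A I e \<ge> 1")
          case True then show ?thesis using psi_le2[of A ?J e] c'0 c1 by simp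
        next
          case False
          then have p0: "psi A I e = 0" by simp
          then have nQ: "\<not> QQ A I e" and nOD: "\<not> (Ob A I e \<and> Db A I e)"
             and nQ1: "\<not> (Q1 A I e \<and> (Ob A I e \<or> Db A I e))"
            unfolding psi_def by (auto split: if_splits)
          have "psi A ?J e \<le> 1"
          proof (rule psi_le1')
            show "\<not> QQ A ?J e"
            proof
              assume "QQ A ?J e"
              then obtain x y m n where xy: "x \<in> e" "y \<in> e" "m \<noteq> n" "sgl A ?J m x" "sgl A ?J n y"
                unfolding QQ_def by blast
              from xy(4) si have "(m = t \<and> outs A I x) \<or> (sgl A I m x)" by auto
              moreover from xy(5) si have "(n = t \<and> outs A I y) \<or> (sgl A I n y)" by auto
              ultimately show False using xy nQ nQ1 unfolding QQ_def Q1_def Ob_def by blast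
            qed
            show "\<not> (Ob A ?J e \<and> Db A ?J e)"
            proof
              assume "Ob A ?J e \<and> Db A ?J e"
              then obtain x y where x: "x \<in> e" "outs A I x" and y: "y \<in> e" "dbl A ?J y"
                using oi unfolding Ob_def Db_def by auto
              from y di have "dbl A I y \<or> (\<exists>m. sgl A I m y)" by auto
              then show False using nOD nQ1 x y unfolding Ob_def Db_def Q1_def by blast
            qed
          qed
          then show ?thesis using p0 c'0 c1 by simp
        qed
      next
        case c'1: False
        from c'1 obtain z where z: "z \<in> e" "dbl A I z" unfolding crs_def by (auto split: if_splits)
        show ?thesis
        proof (cases "psi A I e = 2")
          case True then show ?thesis using psi_le2[of A ?J e] c1 crs_le1[of "A t \<inter> {x. dbl A I x}" e] by simp
        next
          case False
          have dI: "Db A I e" using z unfolding Db_def by blast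
          then have nQ: "\<not> QQ A I e" and nO: "\<not> Ob A I e" using False psi_2[of A I e] by blast+
          have sJ: "sgl A I m x" if "x \<in> e" "sgl A ?J m x" for x m
            using that si nO unfolding Ob_def by auto
          have nQJ: "\<not> QQ A ?J e" using sJ nQ unfolding QQ_def by blast
          have nOJ: "\<not> Ob A ?J e" using nO oi unfolding Ob_def by auto
          have "psi A ?J e \<le> psi A I e"
          proof (cases "psi A ?J e = 1")
            case True
            from psi_1D[OF True] sJ have "Q1 A I e" unfolding Q1_def by blast
            then have "psi A I e \<ge> 1" using psi_ge1 dI by blast
            then show ?thesis using True by simp
          next
            case False then show ?thesis using psi_le1[OF nQJ nOJ] by simp
          qed
          then show ?thesis using c1 unfolding crs_def by (auto split: if_splits)
        qed
      qed
    qed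
  qed
qed

lemma base:
  assumes "i \<noteq> j"
  shows "psi A {i, j} e \<le> crs (A i) e + crs (A j) e"
proof -
  have sg: "sgl A {i,j} m x \<longleftrightarrow> (m = i \<and> x \<in> A i \<and> x \<notin> A j) \<or> (m = j \<and> x \<in> A j \<and> x \<notin> A i)" for m x
    using assms unfolding sgl_def by auto
  have ou: "outs A {i,j} x \<longleftrightarrow> x \<notin> A i \<and> x \<notin> A j" for x unfolding outs_def by auto
  have db: "dbl A {i,j} x \<longleftrightarrow> x \<in> A i \<and> x \<in> A j" for x using assms unfolding dbl_def by auto
  show ?thesis
  proof (cases "psi A {i,j} e = 2")
    case True
    then have "QQ A {i,j} e \<or> (Ob A {i,j} e \<and> Db A {i,j} e)" unfolding psi_def by (auto split: if_splits)
    then have "crs (A i) e = 1 \<and> crs (A j) e = 1"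
    proof
      assume "QQ A {i,j} e"
      then obtain x y m n where "x \<in> e" "y \<in> e" "m \<noteq> n" "sgl A {i,j} m x" "sgl A {i,j} n y"
        unfolding QQ_def by blast
      then show ?thesis unfolding sg crs_def by auto
    next
      assume "Ob A {i,j} e \<and> Db A {i,j} e"
      then obtain x y where "x \<in> e" "y \<in> e" "outs A {i,j} x" "dbl A {i,j} y"
        unfolding Ob_def Db_def by blast
      then show ?thesis unfolding ou db crs_def by auto
    qed
    then show ?thesis using True by simp
  next
    case False
    show ?thesis
    proof (cases "psi A {i,j} e = 1")
      case True
      from psi_1D[OF True] obtain x m where x: "x \<in> e" "sgl A {i,j} m x"
        and od: "Ob A {i,j} e \<or> Db A {i,j} e" unfolding Q1_def by blast
      from od have "crs (A i) e + crs (A j) e \<ge> 1"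
      proof
        assume "Ob A {i,j} e"
        then obtain y where "y \<in> e" "outs A {i,j} y" unfolding Ob_def by blast
        then show ?thesis using x unfolding sg ou crs_def by auto
      next
        assume "Db A {i,j} e"
        then obtain y where "y \<in> e" "dbl A {i,j} y" unfolding Db_def by blast
        then show ?thesis using x unfolding sg db crs_def by auto
      qed
      then show ?thesis using True by simp
    next
      case False
      then have "psi A {i,j} e = 0" using \<open>psi A {i,j} e \<noteq> 2\<close> psi_le2[of A "{i,j}" e] by linarith
      then show ?thesis by simp
    qed
  qed
qed

lemma psi_ge1_gen:
  assumes "x \<in> e" "sgl A I m x" "y \<in> e" "\<not> sgl A I m y"
  shows "psi A I e \<ge> 1"
proof -
  from kinds[of A I y] show ?thesis
  proof (elim disjE)
    assume "outs A I y"
    then have "Q1 A I e" "Ob A I e" using assms unfolding Q1_def Ob_def by blast+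
    then show ?thesis using psi_ge1 by blast
  next
    assume "dbl A I y"
    then have "Q1 A I e" "Db A I e" using assms unfolding Q1_def Db_def by blast+
    then show ?thesis using psi_ge1 by blast
  next
    assume "\<exists>n. sgl A I n y"
    then obtain n where "sgl A I n y" by blast
    with assms have "m \<noteq> n" by auto
    then have "QQ A I e" using assms \<open>sgl A I n y\<close> unfolding QQ_def by blast
    then show ?thesis using psi_2 by (metis one_le_numeral)
  qed
qed

lemma psi_2_gen:
  assumes "x \<in> e" "sgl A I m x" "y \<in> e" "sgl A I n y" "m \<noteq> n"
  shows "psi A I e = 2"
  using assms psi_2[of A I e] unfolding QQ_def by blast

lemma size_filter_sum: "size (filter_mset P M) = (\<Sum>e\<in>#M. if P e then 1 else (0::nat))"
  by (induction M) auto

lemma dcut_sum: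
  assumes "\<forall>e\<in>#E. e \<subseteq> V"
  shows "dcut V E X = (\<Sum>e\<in>#E. crs X e)"
proof -
  have "(\<Sum>e\<in>#E. if e \<inter> X \<noteq> {} \<and> e \<inter> (V - X) \<noteq> {} then 1 else (0::nat)) = (\<Sum>e\<in>#E. crs X e)"
  proof (rule arg_cong[where f = sum_mset], rule image_mset_cong)
    fix e assume "e \<in># E"
    then have "e \<subseteq> V" using assms by blast
    then show "(if e \<inter> X \<noteq> {} \<and> e \<inter> (V - X) \<noteq> {} then 1 else 0) = crs X e"
      unfolding crs_def by auto
  qed
  then show ?thesis unfolding dcut_def size_filter_sum .
qed

lemma dcut_compl:
  assumes "X \<subseteq> V"
  shows "dcut V E (V - X) = dcut V E X"
proof -
  have "V - (V - X) = X" using assms by auto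
  then show ?thesis unfolding dcut_def by (simp add: conj_commute)
qed


theorem theorem3p1:
  fixes V :: "'a set" and E :: "'a set multiset" and k p :: nat
    and R U :: "'a set" and u :: "nat \<Rightarrow> 'a" and A :: "nat \<Rightarrow> 'a set"
  assumes hg: "hypergraph V E"
    and k: "k \<ge> 2"
    and R: "R \<noteq> {}" "R \<subset> U" "U \<subset> V"
    and u: "inj_on u {1..p}" "u ` {1..p} \<subseteq> U - R"
    and p: "p \<ge> 2 * k - 2"
    and cuts: "\<And>i. i \<in> {1..p} \<Longrightarrow>
       min_terminal_cut V E ((u ` {1..p} \<union> R) - {u i}) (V - U) (V - A i) \<and> A i \<subseteq> V"
    and isol: "\<And>i. i \<in> {1..p} \<Longrightarrow> u i \<in> A i - (\<Union>j\<in>{1..p} - {i}. A j)"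
  shows "\<exists>P. is_k_partition V k P \<and> V - U \<subset> P k \<and>
    real (cost E k P) \<le>
      real (Min {dcut V E (A i) + dcut V E (A j) | i j. i \<in> {1..p} \<and> j \<in> {1..p} \<and> i \<noteq> j}) / 2"
proof -
  have Ev: "\<forall>e\<in>#E. e \<subseteq> V" using hg unfolding hypergraph_def by blast
  have p2: "p \<ge> 2" using k p by linarith
  have Asub: "A m \<subseteq> V" if "m \<in> {1..p}" for m using cuts[OF that] by blast
  have tc: "terminal_cut V ((u ` {1..p} \<union> R) - {u m}) (V - U) (V - A m)" if "m \<in> {1..p}" for m
    using cuts[OF that] unfolding min_terminal_cut_def by blast
  have TU: "V - U \<subseteq> A m" if "m \<in> {1..p}" for m
    using tc[OF that] unfolding terminal_cut_def by blast
  have RA: "R \<inter> A m = {}" if "m \<in> {1..p}" for m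
  proof -
    have "u m \<notin> R" using u(2) that by blast
    then have "R \<subseteq> (u ` {1..p} \<union> R) - {u m}" by blast
    then show ?thesis using tc[OF that] unfolding terminal_cut_def by blast
  qed
  have RV: "R \<subseteq> V" "R \<subseteq> U" using R by auto
  have minc: "dcut V E (A t) \<le> dcut V E (A t \<inter> D)" if t: "t \<in> {1..p}" and D: "V - U \<subseteq> D" for t D
  proof -
    let ?T = "(u ` {1..p} \<union> R) - {u t}"
    let ?Y = "V - (A t \<inter> D)"
    have "terminal_cut V ?T (V - U) ?Y"
      using tc[OF t] TU[OF t] D unfolding terminal_cut_def by blast
    then have "dcut V E (V - A t) \<le> dcut V E ?Y" using cuts[OF t] unfolding min_terminal_cut_def by blast
    moreover have "dcut V E (V - A t) = dcut V E (A t)" using dcut_compl Asub[OF t] by blast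
    moreover have "dcut V E ?Y = dcut V E (A t \<inter> D)" using dcut_compl Asub[OF t] by (metis inf.coboundedI1)
    ultimately show ?thesis by simp
  qed
  define M where "M = {dcut V E (A i) + dcut V E (A j) | i j. i \<in> {1..p} \<and> j \<in> {1..p} \<and> i \<noteq> j}"
  have "M = (\<lambda>(i,j). dcut V E (A i) + dcut V E (A j)) ` {(i,j). i \<in> {1..p} \<and> j \<in> {1..p} \<and> i \<noteq> j}"
    unfolding M_def by auto
  moreover have "finite {(i,j). i \<in> {1..p} \<and> j \<in> {1..p} \<and> (i::nat) \<noteq> j}"
    by (rule finite_subset[of _ "{1..p} \<times> {1..p}"]) auto
  ultimately have finM: "finite M" by simp
  have "dcut V E (A 1) + dcut V E (A 2) \<in> M" unfolding M_def using p2 by force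
  then have "M \<noteq> {}" by blast
  then have "Min M \<in> M" using finM by simp
  then obtain i j where ij: "i \<in> {1..p}" "j \<in> {1..p}" "i \<noteq> j" and Mij: "Min M = dcut V E (A i) + dcut V E (A j)"
    unfolding M_def by blast
  have chain: "(\<Sum>e\<in>#E. psi A ({i,j} \<union> J) e) \<le> dcut V E (A i) + dcut V E (A j)"
    if "finite J" "J \<subseteq> {1..p} - {i,j}" for J
    using that
  proof (induction J rule: finite_induct)
    case empty
    have "(\<Sum>e\<in>#E. psi A {i,j} e) \<le> (\<Sum>e\<in>#E. crs (A i) e + crs (A j) e)"
      by (rule sum_mset_mono) (rule base[OF ij(3)])
    also have "\<dots> = dcut V E (A i) + dcut V E (A j)"
      using dcut_sum[OF Ev] by (simp add: sum_mset.distrib)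
    finally show ?case by simp
  next
    case (insert t J)
    let ?I = "{i,j} \<union> J"
    have tI: "t \<notin> ?I" using insert by auto
    have t: "t \<in> {1..p}" using insert by auto
    have DU: "V - U \<subseteq> {x. dbl A ?I x}"
      using TU[OF ij(1)] TU[OF ij(2)] ij(3) unfolding dbl_def by blast
    have "(\<Sum>e\<in>#E. psi A (insert t ?I) e + crs (A t \<inter> {x. dbl A ?I x}) e)
        \<le> (\<Sum>e\<in>#E. psi A ?I e + crs (A t) e)"
      by (rule sum_mset_mono) (rule step[OF tI])
    then have "(\<Sum>e\<in>#E. psi A (insert t ?I) e) + dcut V E (A t \<inter> {x. dbl A ?I x})
        \<le> (\<Sum>e\<in>#E. psi A ?I e) + dcut V E (A t)"
      using dcut_sum[OF Ev] by (simp add: sum_mset.distrib)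
    moreover have "dcut V E (A t) \<le> dcut V E (A t \<inter> {x. dbl A ?I x})" using minc[OF t DU] .
    moreover have "(\<Sum>e\<in>#E. psi A ?I e) \<le> dcut V E (A i) + dcut V E (A j)" using insert by auto
    moreover have "insert t ?I = {i,j} \<union> insert t J" by auto
    ultimately show ?case by simp
  qed
  have "{i,j} \<union> ({1..p} - {i,j}) = {1..p}" using ij by auto
  then have sumpsi: "(\<Sum>e\<in>#E. psi A {1..p} e) \<le> Min M"
    using chain[of "{1..p} - {i,j}"] Mij by simp
  define Z where "Z m = {x. sgl A {1..p} m x}" for m
  have uZ: "u m \<in> Z m" if "m \<in> {1..p}" for m
    using isol[OF that] that unfolding Z_def sgl_def by blast
  have ZA: "Z m \<subseteq> A m" "Z m \<subseteq> V" for m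
    using Asub unfolding Z_def sgl_def by auto
  have Zdisj: "Z m \<inter> Z n = {}" if "m \<noteq> n" for m n
    using excl(4)[of A "{1..p}" m _ n] that unfolding Z_def by blast
  have RZ: "R \<inter> Z m = {}" for m using RA unfolding Z_def sgl_def by blast
  have UZ: "(V - U) \<inter> Z m = {}" for m
  proof -
    { fix x assume x: "x \<in> V - U" "x \<in> Z m"
      then have m: "m \<in> {1..p}" unfolding Z_def sgl_def by blast
      obtain n where n: "n \<in> {1..p}" "n \<noteq> m" using p2 m
        by (metis One_nat_def Suc_1 atLeastAtMost_iff le_refl nat_le_linear not_less_eq_eq one_le_numeral)
      have "x \<in> A n" using TU[OF n(1)] x by blast
      then have False using x n unfolding Z_def sgl_def by blast }
    then show ?thesis by blast
  qed
  define mkP where "mkP c l = (if l < k then Z (c l) else V - (\<Union>l'\<in>{1..<k}. Z (c l')))"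
    for c :: "nat \<Rightarrow> nat" and l
  define cnt where "cnt c e \<longleftrightarrow> (\<exists>a\<in>{1..k}. \<exists>b\<in>{1..k}. a \<noteq> b \<and> e \<inter> mkP c a \<noteq> {} \<and> e \<inter> mkP c b \<noteq> {})"
    for c :: "nat \<Rightarrow> nat" and e :: "'a set"
  have part: "is_k_partition V k (mkP c) \<and> V - U \<subset> mkP c k"
    if c: "c ` {1..<k} \<subseteq> {1..p}" "inj_on c {1..<k}" for c
  proof -
    have Rk: "R \<subseteq> mkP c k" using RV RZ unfolding mkP_def by auto
    have ne: "\<forall>l\<in>{1..k}. mkP c l \<noteq> {}"
    proof
      fix l assume l: "l \<in> {1..k}"
      show "mkP c l \<noteq> {}"
      proof (cases "l < k")
        case True
        then have "l \<in> {1..<k}" using l by auto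
        then have "c l \<in> {1..p}" using c(1) by blast
        then show ?thesis using uZ True unfolding mkP_def by auto
      next
        case False
        then have "l = k" using l by auto
        then show ?thesis using Rk R(1) by auto
      qed
    qed
    have dj: "\<forall>a\<in>{1..k}. \<forall>b\<in>{1..k}. a \<noteq> b \<longrightarrow> mkP c a \<inter> mkP c b = {}"
    proof (intro ballI impI)
      fix a b assume a: "a \<in> {1..k}" and b: "b \<in> {1..k}" and ab: "a \<noteq> b"
      show "mkP c a \<inter> mkP c b = {}"
      proof (cases "a < k \<and> b < k")
        case True
        then have "c a \<noteq> c b" using c(2) a b ab unfolding inj_on_def by auto
        then show ?thesis using Zdisj True unfolding mkP_def by auto
      next
        case False
        then have "(a = k \<and> b < k) \<or> (b = k \<and> a < k)" using a b ab by auto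
        then show ?thesis unfolding mkP_def using a b by auto
      qed
    qed
    have un: "(\<Union>l\<in>{1..k}. mkP c l) = V"
    proof
      show "(\<Union>l\<in>{1..k}. mkP c l) \<subseteq> V" unfolding mkP_def using ZA by auto
      show "V \<subseteq> (\<Union>l\<in>{1..k}. mkP c l)"
      proof
        fix x assume x: "x \<in> V"
        show "x \<in> (\<Union>l\<in>{1..k}. mkP c l)"
        proof (cases "\<exists>l'\<in>{1..<k}. x \<in> Z (c l')")
          case True
          then obtain l' where "l' \<in> {1..<k}" "x \<in> Z (c l')" by blast
          then show ?thesis unfolding mkP_def by (intro UN_I[of l']) auto
        next
          case False
          then show ?thesis unfolding mkP_def using x k by (intro UN_I[of k]) auto
        qed
      qed
    qed
    have sub: "V - U \<subseteq> mkP c k" using UZ unfolding mkP_def by auto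
    obtain r where r: "r \<in> R" using R(1) by blast
    have "r \<in> mkP c k" "r \<notin> V - U" using Rk r RV by auto
    then have "V - U \<subset> mkP c k" using sub by blast
    then show ?thesis using ne dj un unfolding is_k_partition_def by blast
  qed
  have cnt_imp: "\<exists>l\<in>{1..<k}. (\<exists>x\<in>e. sgl A {1..p} (c l) x) \<and> (\<exists>y\<in>e. \<not> sgl A {1..p} (c l) y)"
    if c: "inj_on c {1..<k}" and ce: "cnt c e" for c e
  proof -
    have key: "\<not> sgl A {1..p} (c a) y"
      if "a \<in> {1..k}" "b \<in> {1..k}" "a \<noteq> b" "a < k" "y \<in> mkP c b" for a b y
    proof (cases "b < k")
      case True
      then have "c a \<noteq> c b" using c that unfolding inj_on_def by auto
      then show ?thesis using that True excl(4)[of A "{1..p}" "c a" y "c b"] unfolding mkP_def Z_def by auto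
    next
      case False
      then show ?thesis using that unfolding mkP_def Z_def by auto
    qed
    from ce obtain a b x y where ab: "a \<in> {1..k}" "b \<in> {1..k}" "a \<noteq> b" and
      x: "x \<in> e" "x \<in> mkP c a" and y: "y \<in> e" "y \<in> mkP c b"
      unfolding cnt_def by blast
    show ?thesis
    proof (cases "a < k")
      case True
      then have "sgl A {1..p} (c a) x" using x unfolding mkP_def Z_def by auto
      moreover have "\<not> sgl A {1..p} (c a) y" using key[OF ab True y(2)] .
      ultimately show ?thesis using x y ab True by auto
    next
      case False
      then have bk: "b < k" using ab by auto
      then have "sgl A {1..p} (c b) y" using y unfolding mkP_def Z_def by auto
      moreover have "\<not> sgl A {1..p} (c b) x" using key[OF ab(2,1) ab(3)[symmetric] bk x(2)] .
      ultimately show ?thesis using x y ab bk by auto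
    qed
  qed
  define c1 where "c1 l = l" for l :: nat
  define c2 where "c2 l = l + (k - 1)" for l :: nat
  have c1: "c1 ` {1..<k} \<subseteq> {1..p}" "inj_on c1 {1..<k}" using p unfolding c1_def by auto
  have c2: "c2 ` {1..<k} \<subseteq> {1..p}" "inj_on c2 {1..<k}" using p unfolding c2_def inj_on_def by auto
  have edge: "(if cnt c1 e then 1 else 0) + (if cnt c2 e then 1 else 0) \<le> psi A {1..p} e" for e
  proof (cases "cnt c1 e")
    case True note T1 = True
    obtain l1 x1 y1 where l1: "l1 \<in> {1..<k}" "x1 \<in> e" "sgl A {1..p} (c1 l1) x1" "y1 \<in> e" "\<not> sgl A {1..p} (c1 l1) y1"
      using cnt_imp[OF c1(2) True] by blast
    show ?thesis
    proof (cases "cnt c2 e")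
      case True
      obtain l2 x2 where l2: "l2 \<in> {1..<k}" "x2 \<in> e" "sgl A {1..p} (c2 l2) x2"
        using cnt_imp[OF c2(2) True] by blast
      have "c1 l1 \<noteq> c2 l2" using l1(1) l2(1) unfolding c1_def c2_def by auto
      then have "psi A {1..p} e = 2" using psi_2_gen[OF l1(2,3) l2(2,3)] by blast
      then show ?thesis using T1 True by simp
    next
      case False
      then show ?thesis using T1 psi_ge1_gen[OF l1(2-5)] by simp
    qed
  next
    case False note F1 = False
    show ?thesis
    proof (cases "cnt c2 e")
      case True
      obtain l2 x2 y2 where l2: "l2 \<in> {1..<k}" "x2 \<in> e" "sgl A {1..p} (c2 l2) x2" "y2 \<in> e" "\<not> sgl A {1..p} (c2 l2) y2"
        using cnt_imp[OF c2(2) True] by blast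
      then show ?thesis using F1 True psi_ge1_gen[OF l2(2-5)] by simp
    next
      case False then show ?thesis using F1 by simp
    qed
  qed
  have costc: "cost E k (mkP c) = (\<Sum>e\<in>#E. if cnt c e then 1 else 0)" for c
    unfolding cost_def cnt_def size_filter_sum by simp
  have "cost E k (mkP c1) + cost E k (mkP c2) \<le> (\<Sum>e\<in>#E. psi A {1..p} e)"
  proof -
    have "cost E k (mkP c1) + cost E k (mkP c2) = (\<Sum>e\<in>#E. (if cnt c1 e then 1 else 0) + (if cnt c2 e then 1 else 0))"
      unfolding costc by (simp add: sum_mset.distrib)
    also have "\<dots> \<le> (\<Sum>e\<in>#E. psi A {1..p} e)" by (rule sum_mset_mono) (rule edge)
    finally show ?thesis .
  qed
  then have tot: "cost E k (mkP c1) + cost E k (mkP c2) \<le> Min M" using sumpsi by linarith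
  show ?thesis
  proof (cases "cost E k (mkP c1) \<le> cost E k (mkP c2)")
    case True
    then have "real (cost E k (mkP c1)) \<le> real (Min M) / 2" using tot by linarith
    then show ?thesis using part[OF c1] unfolding M_def by blast
  next
    case False
    then have "real (cost E k (mkP c2)) \<le> real (Min M) / 2" using tot by linarith
    then show ?thesis using part[OF c2] unfolding M_def by blast
  qed
qed

end
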